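(* Let $d\in\mathbb{N}$, $Q=[-1/2,1/2]^d$, let $z\in\mathbb{R}^d$ be a unit vector and let $s>0$. Then $$|\{y\in Q:\langle z,y\rangle\ge s\}|\le e^{-\frac78 s^2},$$ where $|\cdot|$ denotes Lebesgue measure. *)

theory Defs
  imports "HOL-Analysis.Analysis"
begin

end

theory Submission
  imports Defs "HOL-Probability.Hoeffding"
begin

lemma cosh_bound: "exp (a::real) + exp (-a) \<le> 2 * exp (a^2/2)"
proof -
  have key: "exp (h::real) + exp (-h) \<le> 2 * exp (h^2/2)" if "h \<ge> 0" for h
  proof -
    have "-(2*h) * (1/2) + ln (1 + (1/2) * (exp (2*h) - 1)) \<le> (2*h)^2/8"
      using Hoeffdings_lemma_aux[of "2*h" "1/2"] that by simp
    hence "ln ((1 + exp (2*h))/2) \<le> h + h^2/2"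
      by (simp add: power2_eq_square field_simps)
    hence "(1 + exp (2*h))/2 \<le> exp (h + h^2/2)"
      by (smt (verit) exp_gt_zero exp_le_cancel_iff exp_ln)
    hence "exp (-h) * ((1 + exp (2*h))/2) \<le> exp (-h) * exp (h + h^2/2)"
      by (intro mult_left_mono) auto
    moreover have "exp (-h) * ((1 + exp (2*h))/2) = (exp h + exp (-h))/2"
      by (simp add: field_simps flip: exp_add)
    moreover have "exp (-h) * exp (h + h^2/2) = exp (h^2/2)"
      by (simp flip: exp_add)
    ultimately show ?thesis by simp
  qed
  show ?thesis
  proof (cases "a \<ge> 0")
    case True then show ?thesis using key by blast
  next
    case False then show ?thesis using key[of "-a"] by simp
  qed
qed

lemma half_le: "(a::ennreal) + a \<le> 2 * x \<Longrightarrow> a \<le> x"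
proof -
  assume h: "a + a \<le> 2 * x"
  hence "2 * a \<le> 2 * x" by (simp add: mult_2)
  thus ?thesis using ennreal_mult_le_mult_iff[of 2 a x] by simp
qed

lemma inner_const_basis:
  fixes b :: "real ^ 'n"
  assumes "b \<in> Basis"
  shows "(\<chi> i. c) \<bullet> b = c"
  using assms by (auto simp: Basis_vec_def inner_axis)

lemma one_dim:
  fixes c :: real
  shows "(\<integral>\<^sup>+t. ennreal (indicator {-1/2..1/2} t * exp (c*t)) \<partial>lborel) \<le> ennreal (exp (c^2/8))"
proof -
  define I where "I = (\<lambda>c. \<integral>\<^sup>+t. ennreal (indicator {-1/2..1/2::real} t * exp (c*t)) \<partial>lborel)"
  have refl: "I c = I (-c)"
  proof -
    have "I c = (\<integral>\<^sup>+t. ennreal (indicator {-1/2..1/2::real} t * exp (c*t)) \<partial>(distr lborel borel uminus))"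
      unfolding I_def by (simp add: lborel_distr_uminus)
    also have "\<dots> = (\<integral>\<^sup>+t. ennreal (indicator {-1/2..1/2::real} (-t) * exp (c*(-t))) \<partial>lborel)"
      by (subst nn_integral_distr) auto
    also have "\<dots> = I (-c)"
      unfolding I_def by (intro nn_integral_cong) (auto simp: indicator_def)
    finally show ?thesis .
  qed
  have "I c + I (-c) = (\<integral>\<^sup>+t. ennreal (indicator {-1/2..1/2::real} t * exp (c*t)) + ennreal (indicator {-1/2..1/2::real} t * exp ((-c)*t)) \<partial>lborel)"
    unfolding I_def by (subst nn_integral_add) auto
  also have "\<dots> \<le> (\<integral>\<^sup>+t. ennreal (2 * exp (c^2/8)) * indicator {-1/2..1/2::real} t \<partial>lborel)"
  proof (intro nn_integral_mono)
    fix t :: real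
    show "ennreal (indicator {-1/2..1/2::real} t * exp (c*t)) + ennreal (indicator {-1/2..1/2::real} t * exp ((-c)*t))
      \<le> ennreal (2 * exp (c^2/8)) * indicator {-1/2..1/2::real} t"
    proof (cases "t \<in> {-1/2..1/2}")
      case True
      have "(c*t)^2 \<le> c^2/4"
      proof -
        have "\<bar>t\<bar> \<le> 1/2" using True by auto
        hence "\<bar>t\<bar>^2 \<le> (1/2)^2" by (intro power_mono) auto
        hence "t^2 \<le> 1/4" by (simp add: power2_eq_square)
        hence "c^2 * t^2 \<le> c^2 * (1/4)" by (intro mult_left_mono) auto
        thus ?thesis by (simp add: power_mult_distrib)
      qed
      hence "exp ((c*t)^2/2) \<le> exp (c^2/8)" by simp
      hence "exp (c*t) + exp (-(c*t)) \<le> 2 * exp (c^2/8)"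
        using cosh_bound[of "c*t"] by linarith
      then show ?thesis using True
        by (simp add: ennreal_plus[symmetric] del: ennreal_plus)
    qed simp
  qed
  also have "\<dots> = ennreal (2 * exp (c^2/8))"
    by (subst nn_integral_cmult_indicator) auto
  finally have "I c + I c \<le> 2 * ennreal (exp (c^2/8))"
    using refl by (simp add: ennreal_mult)
  hence "I c \<le> ennreal (exp (c^2/8))" by (rule half_le)
  thus ?thesis unfolding I_def .
qed

theorem mainTheorem13:
  fixes z :: "real ^ 'n" and s :: real
  assumes "norm z = 1" and "s > 0"
  shows "measure lebesgue {y \<in> cbox (\<chi> i. - 1/2) (\<chi> i. 1/2). z \<bullet> y \<ge> s}
           \<le> exp (- (7/8) * s\<^sup>2)"
proof -
  define Q :: "(real ^ 'n) set" where "Q = cbox (\<chi> i. - 1/2) (\<chi> i. 1/2)"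
  define S where "S = {y \<in> Q. z \<bullet> y \<ge> s}"
  define l where "l = 4 * s"
  have l: "l > 0" using assms by (simp add: l_def)
  define F where "F = (\<lambda>(b::real^'n) t. ennreal (indicator {-1/2..1/2::real} t * exp (l * (z \<bullet> b) * t)))"
  have memQ: "y \<in> Q \<longleftrightarrow> (\<forall>b\<in>Basis. -1/2 \<le> y \<bullet> b \<and> y \<bullet> b \<le> 1/2)" for y
    unfolding Q_def mem_box by (simp add: inner_const_basis)
  have SQ: "S = Q \<inter> {y. z \<bullet> y \<ge> s}" unfolding S_def by auto
  have "closed S" unfolding SQ Q_def
    by (intro closed_Int closed_cbox closed_halfspace_ge)
  hence Sset: "S \<in> sets lborel" by simp
  have pw: "indicator S y \<le> ennreal (exp (- l * s)) * (\<Prod>b\<in>Basis. F b (y \<bullet> b))" for y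
  proof (cases "y \<in> S")
    case True
    hence yQ: "y \<in> Q" and ys: "z \<bullet> y \<ge> s" unfolding S_def by auto
    have "(\<Prod>b\<in>Basis. F b (y \<bullet> b)) = (\<Prod>b\<in>Basis. ennreal (exp (l * (z \<bullet> b) * (y \<bullet> b))))"
      using yQ memQ by (intro prod.cong) (auto simp: F_def indicator_def)
    also have "\<dots> = ennreal (\<Prod>b\<in>Basis. exp (l * (z \<bullet> b) * (y \<bullet> b)))"
      by (rule prod_ennreal) auto
    also have "(\<Prod>b\<in>Basis. exp (l * (z \<bullet> b) * (y \<bullet> b))) = exp (\<Sum>b\<in>Basis. l * (z \<bullet> b) * (y \<bullet> b))"
      by (simp add: exp_sum)
    also have "(\<Sum>b\<in>Basis. l * (z \<bullet> b) * (y \<bullet> b)) = l * (z \<bullet> y)"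
      by (simp add: euclidean_inner[of z y] sum_distrib_left mult.assoc)
    finally have P: "(\<Prod>b\<in>Basis. F b (y \<bullet> b)) = ennreal (exp (l * (z \<bullet> y)))" .
    have "1 \<le> exp (- l * s) * exp (l * (z \<bullet> y))"
    proof -
      have "l * s \<le> l * (z \<bullet> y)" using l ys by (intro mult_left_mono) auto
      hence "0 \<le> - l * s + l * (z \<bullet> y)" by simp
      thus ?thesis by (simp flip: exp_add)
    qed
    thus ?thesis using True P by (simp add: ennreal_mult[symmetric] del: ennreal_mult)
  qed simp
  have meas: "(\<lambda>y. \<Prod>b\<in>Basis. F b (y \<bullet> b)) \<in> borel_measurable lborel"
    unfolding F_def by measurable
  have "emeasure lborel S = (\<integral>\<^sup>+y. indicator S y \<partial>lborel)"
    using Sset by simp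
  also have "\<dots> \<le> (\<integral>\<^sup>+y. ennreal (exp (- l * s)) * (\<Prod>b\<in>Basis. F b (y \<bullet> b)) \<partial>lborel)"
    by (intro nn_integral_mono pw)
  also have "\<dots> = ennreal (exp (- l * s)) * (\<integral>\<^sup>+y. (\<Prod>b\<in>Basis. F b (y \<bullet> b)) \<partial>lborel)"
    using meas by (rule nn_integral_cmult)
  finally have A: "emeasure lborel S \<le> ennreal (exp (- l * s)) * (\<integral>\<^sup>+y. (\<Prod>b\<in>Basis. F b (y \<bullet> b)) \<partial>lborel)" .
  have "(\<integral>\<^sup>+y. (\<Prod>b\<in>Basis. F b (y \<bullet> b)) \<partial>lborel) = (\<Prod>b\<in>Basis. \<integral>\<^sup>+t. F b t \<partial>lborel)"
    by (rule nn_integral_lborel_prod) (auto simp: F_def)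
  also have "\<dots> \<le> (\<Prod>b\<in>Basis. ennreal (exp ((l * (z \<bullet> b))^2/8)))"
  proof (rule prod_mono_ennreal)
    fix b :: "real^'n"
    show "(\<integral>\<^sup>+t. F b t \<partial>lborel) \<le> ennreal (exp ((l * (z \<bullet> b))^2/8))"
      using one_dim[of "l * (z \<bullet> b)"] unfolding F_def by simp
  qed
  also have "\<dots> = ennreal (\<Prod>b\<in>Basis. exp ((l * (z \<bullet> b))^2/8))"
    by (rule prod_ennreal) auto
  also have "(\<Prod>b\<in>Basis. exp ((l * (z \<bullet> b))^2/8)) = exp (\<Sum>b\<in>Basis. (l * (z \<bullet> b))^2/8)"
    by (simp add: exp_sum)
  also have "(\<Sum>b\<in>Basis. (l * (z \<bullet> b))^2/8) = l^2/8 * (z \<bullet> z)"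
    by (simp add: euclidean_inner[of z z] sum_distrib_left power_mult_distrib power2_eq_square mult_ac sum_divide_distrib)
  also have "z \<bullet> z = 1" using assms(1) by (simp add: dot_square_norm)
  finally have B: "(\<integral>\<^sup>+y. (\<Prod>b\<in>Basis. F b (y \<bullet> b)) \<partial>lborel) \<le> ennreal (exp (l^2/8))"
    by simp
  have E: "emeasure lborel S \<le> ennreal (exp (- l * s) * exp (l^2/8))"
    using order_trans[OF A mult_left_mono[OF B]] by (simp add: ennreal_mult)
  have "exp (- l * s) * exp (l^2/8) = exp (- 2 * s^2)"
    by (simp add: l_def power2_eq_square flip: exp_add)
  also have "\<dots> \<le> exp (- (7/8) * s\<^sup>2)" by simp
  finally have E2: "emeasure lborel S \<le> ennreal (exp (- (7/8) * s\<^sup>2))"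
    using E by (meson ennreal_leI order_trans)
  have "measure lebesgue S = measure lborel S" using Sset by simp
  also have "\<dots> \<le> exp (- (7/8) * s\<^sup>2)"
    unfolding measure_def by (rule enn2real_leI) (use E2 in auto)
  finally show ?thesis unfolding S_def Q_def .
qed

end
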